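(* For every $u$, the triangle $T=P_1P_2P_3$ is inscribed in $\mathcal{E}$, has centroid $O$ (so $\mathcal{E}$ is its Steiner circumellipse), its three sides are tangent to the ellipse $x^2/a^2+y^2/b^2=1/4$ (its Steiner inellipse), and its area equals $\frac{3\sqrt3}{4}ab$. Hence, as $u$ varies, the triangles $T$ form a Poncelet family of constant area between $\mathcal{E}$ and the caustic $x^2/a^2+y^2/b^2=1/4$. Moreover, $M$ is the Steiner point of $T$.
   Context: Let $a>b>0$. Let $\mathcal{E}$ be the ellipse $x^2/a^2+y^2/b^2=1$ with center $O=(0,0)$, parametrized by $P(t)=(a\cos t,b\sin t)$. Fix $u\in\mathbb{R}$ and let $M=(a\cos u,b\sin u)$. For $i=1,2,3$ let $t_i=-u/3-2\pi(i-1)/3$ and $P_i=P(t_i)$ (the pre-images of the cusps of the negative pedal curve of $\mathcal{E}$ with respect to $M$). The Steiner point of a triangle is the fourth common point (counted with multiplicity) of its circumcircle and its Steiner circumellipse (the ellipse through the vertices centered at the centroid), besides the vertices. *)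

theory Defs
  imports "HOL-Analysis.Analysis" "HOL-Computational_Algebra.Polynomial"
begin

text \<open>Points of the plane are represented as complex numbers: (x,y) is Complex x y.\<close>

definition on_ellipse :: "real \<Rightarrow> real \<Rightarrow> real \<Rightarrow> complex \<Rightarrow> bool" where
  "on_ellipse a b k z \<longleftrightarrow> (Re z / a)^2 + (Im z / b)^2 = k"

definition side_tangent :: "real \<Rightarrow> real \<Rightarrow> real \<Rightarrow> complex \<Rightarrow> complex \<Rightarrow> bool" where
  "side_tangent a b k A B \<longleftrightarrow> A \<noteq> B \<and>
     (\<exists>!X. on_ellipse a b k X \<and> (\<exists>s::real. X = A + of_real s * (B - A))) \<and>
     (\<forall>X. on_ellipse a b k X \<and> (\<exists>s::real. X = A + of_real s * (B - A)) \<longrightarrow> X \<in> closed_segment A B)"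

definition tri_area :: "complex \<Rightarrow> complex \<Rightarrow> complex \<Rightarrow> real" where
  "tri_area A B C = \<bar>Im (cnj (B - A) * (C - A))\<bar> / 2"

text \<open>Every ellipse centred at G is {G + \<alpha> z + \<beta>/z : |z| = 1} with
  |\<alpha>| \<noteq> |\<beta>|, z = e^{it} being a regular parametrisation.  For the circle with centre ctr
  and radius R, the function |X(z) - ctr|^2 - R^2 multiplied by z^2 is (on |z| = 1) the polynomial
  (\<beta> + w z + \<alpha> z^2)(cnj \<alpha> + cnj w z + cnj \<beta> z^2) - R^2 z^2, where w = G - ctr; its roots
  (with multiplicity) are the parameters of the common points of circle and ellipse (with
  intersection multiplicity).  S is the Steiner point of the (nondegenerate) triangle ABC iff,
  for the Steiner circumellipse (centre = centroid G, through A, B, C) and the circumcircle,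
  this degree-4 polynomial has exactly the roots zA, zB, zC, zS (with multiplicity), where
  X zA = A, X zB = B, X zC = C, X zS = S.\<close>
definition steiner_point :: "complex \<Rightarrow> complex \<Rightarrow> complex \<Rightarrow> complex \<Rightarrow> bool" where
  "steiner_point A B C S \<longleftrightarrow>
     Im (cnj (B - A) * (C - A)) \<noteq> 0 \<and>
     (\<exists>ctr R \<alpha> \<beta> zA zB zC zS c.
        let G = (A + B + C) / 3; X = (\<lambda>z. G + \<alpha> * z + \<beta> / z); w = G - ctr in
        cmod \<alpha> \<noteq> cmod \<beta> \<and>
        cmod zA = 1 \<and> cmod zB = 1 \<and> cmod zC = 1 \<and> cmod zS = 1 \<and>
        A = X zA \<and> B = X zB \<and> C = X zC \<and> S = X zS \<and>
        cmod (A - ctr) = R \<and> cmod (B - ctr) = R \<and> cmod (C - ctr) = R \<and>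
        c \<noteq> 0 \<and>
        [:\<beta>, w, \<alpha>:] * [:cnj \<alpha>, cnj w, cnj \<beta>:] - monom (complex_of_real (R^2)) 2
          = smult c ([:-zA, 1:] * [:-zB, 1:] * [:-zC, 1:] * [:-zS, 1:]))"

end

theory Submission
  imports Defs
begin

lemma poly_expand1:
  "([:B, w, A:] * [:cnj A, cnj w, cnj B:] - monom (complex_of_real (R^2)) 2 :: complex poly)
  = [:B * cnj A, B * cnj w + w * cnj A, B*cnj B + w * cnj w + A * cnj A - R^2, w * cnj B + A * cnj w, A * cnj B:]"
  by (simp add: numeral_2_eq_2 monom_Suc monom_0 algebra_simps)

lemma poly_expand2: "smult c ([:-zA, 1:] * [:-zB, 1:] * [:-zC, 1:] * [:-zS, 1:] :: complex poly) = 
   [:c*zA*zB*zC*zS, - c*(zA*zB*zC + zA*zB*zS+zA*zC*zS+zB*zC*zS), c*(zA*zB+zA*zC+zA*zS+zB*zC+zB*zS+zC*zS), -c*(zA+zB+zC+zS), c:]"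
  apply simp by (simp add: algebra_simps)

lemma poly_part:
  fixes zA zB zC zS w :: complex and Ap Bp R :: real
  assumes e1: "zA+zB+zC = 0" and e2: "zA*zB+zA*zC+zB*zC = 0" and e3: "zA*zB*zC*zS = 1"
    and h1: "Bp * cnj w + Ap * w = - (Ap*Bp) * (zA*zB*zC)"
    and h2: "Ap * cnj w + Bp * w = - (Ap*Bp) * zS"
    and h3: "Bp^2 + w * cnj w + Ap^2 = R^2"
  shows "[:complex_of_real Bp, w, complex_of_real Ap:] * [:cnj (complex_of_real Ap), cnj w, cnj (complex_of_real Bp):]
     - monom (complex_of_real (R^2)) 2
     = smult (complex_of_real (Ap*Bp)) ([:-zA, 1:] * [:-zB, 1:] * [:-zC, 1:] * [:-zS, 1:])"
proof -
  have a: "zA*zB*zC + zA*zB*zS+zA*zC*zS+zB*zC*zS = zA*zB*zC + zS*(zA*zB+zA*zC+zB*zC)"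
    by (simp add: algebra_simps)
  have b: "zA*zB+zA*zC+zA*zS+zB*zC+zB*zS+zC*zS = (zA*zB+zA*zC+zB*zC) + zS * (zA+zB+zC)"
    by (simp add: algebra_simps)
  have c: "zA+zB+zC+zS = zS" using e1 by simp
  have d: "complex_of_real (Ap*Bp)*zA*zB*zC*zS = complex_of_real (Ap*Bp) * (zA*zB*zC*zS)"
    by (simp add: algebra_simps)
  show ?thesis
    unfolding poly_expand1 poly_expand2 a b c d
    using h1 h2 h3 e2 e1 e3
    by (simp add: algebra_simps power2_eq_square)
qed

lemma tangent_lemma:
  fixes a b x1 y1 x2 y2 :: real
  assumes "a > 0" "b > 0" "x1^2+y1^2=1" "x2^2+y2^2=1" "x1*x2+y1*y2 = -1/2"
  shows "side_tangent a b (1/4) (Complex (a*x1) (b*y1)) (Complex (a*x2) (b*y2))"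
proof -
  define A where "A = Complex (a*x1) (b*y1)"
  define B where "B = Complex (a*x2) (b*y2)"
  have key: "on_ellipse a b (1/4) (A + of_real s * (B - A)) \<longleftrightarrow> s = 1/2" for s
  proof -
    have "on_ellipse a b (1/4) (A + of_real s * (B - A)) \<longleftrightarrow>
       (x1 + s*(x2-x1))^2 + (y1 + s*(y2-y1))^2 = 1/4"
    proof -
      have "Re (A + of_real s * (B - A)) / a = x1 + s*(x2-x1)"
        using assms(1) by (simp add: A_def B_def field_simps)
      moreover have "Im (A + of_real s * (B - A)) / b = y1 + s*(y2-y1)"
        using assms(2) by (simp add: A_def B_def field_simps)
      ultimately show ?thesis by (simp add: on_ellipse_def)
    qed
    moreover have "(x1 + s*(x2-x1))^2 + (y1 + s*(y2-y1))^2 - 1/4 = 3*(s-1/2)^2"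
    proof -
      have "(x1 + s*(x2-x1))^2 + (y1 + s*(y2-y1))^2 = (x1^2+y1^2) + 2 * s * (x1*x2+y1*y2 - (x1^2+y1^2))
          + s^2 * (x1^2+y1^2+(x2^2+y2^2) - 2 * (x1*x2+y1*y2))"
        by (simp add: power2_eq_square algebra_simps)
      also have "\<dots> = 1 - 3* s + 3* s^2" using assms(3-5) by simp
      finally show ?thesis by (simp add: power2_eq_square algebra_simps)
    qed
    ultimately have "on_ellipse a b (1/4) (A + of_real s * (B - A)) \<longleftrightarrow> (s-1/2)^2 = 0"
      by (smt (verit) zero_le_power2)
    thus ?thesis by simp
  qed
  have neq: "A \<noteq> B"
  proof
    assume "A = B" hence "x1 = x2" "y1 = y2" using assms(1,2) by (auto simp: A_def B_def)
    thus False using assms(3,5) by (simp add: power2_eq_square)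
  qed
  have mid: "A + of_real (1/2) * (B - A) \<in> closed_segment A B"
  proof -
    have "A + of_real (1/2) * (B - A) = (1 - 1/2) *\<^sub>R A + (1/2) *\<^sub>R B"
      by (simp add: scaleR_conv_of_real field_simps)
    thus ?thesis unfolding closed_segment_def by fastforce
  qed
  show ?thesis
    unfolding side_tangent_def A_def[symmetric] B_def[symmetric]
  proof (intro conjI neq allI impI)
    show "\<exists>!X. on_ellipse a b (1/4) X \<and> (\<exists>s::real. X = A + of_real s * (B - A))"
    proof (rule ex1I[of _ "A + of_real (1/2) * (B - A)"])
      show "on_ellipse a b (1/4) (A + of_real (1/2) * (B - A)) \<and> (\<exists>s::real. A + of_real (1/2) * (B - A) = A + of_real s * (B - A))"
        using key[of "1/2"] by blast
      fix X assume "on_ellipse a b (1/4) X \<and> (\<exists>s::real. X = A + of_real s * (B - A))"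
      then obtain s where X: "X = A + of_real s * (B - A)" and "on_ellipse a b (1/4) X" by blast
      hence "s = 1/2" using key[of s] by blast
      thus "X = A + of_real (1/2) * (B - A)" using X by (simp only:)
    qed
    show "X \<in> closed_segment A B" if "on_ellipse a b (1/4) X \<and> (\<exists>s::real. X = A + of_real s * (B - A))" for X
    proof -
      from that obtain s where X: "X = A + of_real s * (B - A)" and "on_ellipse a b (1/4) X" by blast
      hence "s = 1/2" using key[of s] by blast
      thus ?thesis using X mid by (simp only:)
    qed
  qed
qed

lemma cos_shift: "cos (x - 2*pi*real k) = cos x"
proof -
  have h: "2*pi*real k = real (2*k) * pi" by simp
  have "cos (2*pi*real k) = 1" unfolding h cos_npi by simp
  moreover have "sin (2*pi*real k) = 0" unfolding h by (rule sin_npi)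
  ultimately show ?thesis by (simp add: cos_diff)
qed

lemma P_cis:
  "Complex (a*cos t) (b* sin t) = complex_of_real ((a+b)/2) * cis t + complex_of_real ((a-b)/2) / cis t"
proof -
  have inv: "complex_of_real ((a-b)/2) / cis t = complex_of_real ((a-b)/2) * cis (-t)"
  proof -
    have "cis 0 / cis t = cis (0 - t)" by (rule cis_divide)
    hence "1 / cis t = cis (-t)" by simp
    thus ?thesis by (metis times_divide_eq_right mult.right_neutral)
  qed
  show ?thesis unfolding inv by (simp add: complex_eq_iff; simp add: field_simps)
qed

lemma circ:
  fixes a b u t :: real
  assumes "a > 0" "b > 0" "cos t * cos u - sin t * sin u = cos t ^ 2 - sin t ^ 2"
  defines "K \<equiv> ((a+b)/2) * ((a-b)/2)"
  shows "cmod (Complex (a*cos t) (b* sin t) - Complex (K*cos u/a) (-K* sin u/b))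
     = sqrt (((a+b)/2)^2 + ((a-b)/2)^2 + (K*cos u/a)^2 + (K* sin u/b)^2)"
proof -
  define X where "X = K*cos u/a"
  define Y where "Y = K* sin u/b"
  have aX: "a*X = K*cos u" using assms(1) by (simp add: X_def)
  have bY: "b*Y = K* sin u" using assms(2) by (simp add: Y_def)
  have "(a*cos t - X)^2 + (b* sin t + Y)^2 = a^2*cos t^2 + b^2* sin t^2 - 2*(cos t*(a*X) - sin t*(b*Y)) + X^2 + Y^2"
    by (simp add: power2_eq_square algebra_simps)
  also have "\<dots> = a^2*cos t^2 + b^2* sin t^2 - 2*K*(cos t * cos u - sin t * sin u) + X^2 + Y^2"
    unfolding aX bY by (simp add: algebra_simps)
  also have "\<dots> = a^2*cos t^2 + b^2* sin t^2 - 2*K*(cos t ^ 2 - sin t ^ 2) + X^2 + Y^2"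
    using assms(3) by simp
  also have "\<dots> = ((a+b)/2)^2 + ((a-b)/2)^2 + X^2 + Y^2"
  proof -
    have e: "a^2*C^2 + b^2*S^2 - 2*K*(C^2 - S^2) = (a^2+b^2)/2 * (C^2+S^2)" for C S
      unfolding K_def by (simp add: power2_eq_square field_simps)
    have f: "((a+b)/2)^2 + ((a-b)/2)^2 = (a^2+b^2)/2"
      by (simp add: power2_eq_square field_simps)
    show ?thesis using e[of "cos t" "sin t"] f by simp
  qed
  finally have "(a*cos t - X)^2 + (b* sin t + Y)^2 = ((a+b)/2)^2 + ((a-b)/2)^2 + X^2 + Y^2" .
  moreover have "Complex (a*cos t) (b* sin t) - Complex (K*cos u/a) (-K* sin u/b) = Complex (a*cos t - X) (b* sin t + Y)"
    by (simp add: X_def Y_def complex_eq_iff)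
  ultimately show ?thesis by (simp add: complex_norm X_def Y_def)
qed

lemma steiner_intro:
  assumes "Im (cnj (B - A) * (C - A)) \<noteq> 0" "(A+B+C)/3 = G" "cmod \<alpha> \<noteq> cmod \<beta>"
    "cmod zA = 1" "cmod zB = 1" "cmod zC = 1" "cmod zS = 1"
    "A = G + \<alpha> * zA + \<beta> / zA" "B = G + \<alpha> * zB + \<beta> / zB" "C = G + \<alpha> * zC + \<beta> / zC"
    "S = G + \<alpha> * zS + \<beta> / zS"
    "cmod (A - ctr) = R" "cmod (B - ctr) = R" "cmod (C - ctr) = R" "c \<noteq> 0"
    "[:\<beta>, G - ctr, \<alpha>:] * [:cnj \<alpha>, cnj (G - ctr), cnj \<beta>:] - monom (complex_of_real (R^2)) 2
          = smult c ([:-zA, 1:] * [:-zB, 1:] * [:-zC, 1:] * [:-zS, 1:])"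
  shows "steiner_point A B C S"
  unfolding steiner_point_def Let_def
  apply (rule conjI, rule assms(1))
  apply (rule exI[of _ ctr], rule exI[of _ R], rule exI[of _ \<alpha>], rule exI[of _ \<beta>])
  apply (rule exI[of _ zA], rule exI[of _ zB], rule exI[of _ zC], rule exI[of _ zS], rule exI[of _ c])
  using assms by simp

lemma h12:
  fixes a b u Ap Bp :: real and w :: complex
  assumes "a > 0" "b > 0" "Ap + Bp = a" "Ap - Bp = b"
    "w = 0 - Complex (Ap*Bp*cos u/a) (-(Ap*Bp) * sin u/b)"
  shows "complex_of_real Bp * cnj w + complex_of_real Ap * w = - complex_of_real (Ap*Bp) * cis (-u)"
    and "complex_of_real Ap * cnj w + complex_of_real Bp * w = - complex_of_real (Ap*Bp) * cis u"
proof -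
  have x: "(Ap + Bp) * (Ap*Bp*cos u/a) = Ap*Bp * cos u" "(Ap - Bp) * (Ap*Bp * sin u/b) = Ap*Bp * sin u"
    using assms(1,2) unfolding assms(3,4) by simp_all
  show "complex_of_real Bp * cnj w + complex_of_real Ap * w = - complex_of_real (Ap*Bp) * cis (-u)"
    using x unfolding assms(5) by (simp add: complex_eq_iff algebra_simps add_divide_distrib diff_divide_distrib; linarith)
  show "complex_of_real Ap * cnj w + complex_of_real Bp * w = - complex_of_real (Ap*Bp) * cis u"
    using x unfolding assms(5) by (simp add: complex_eq_iff algebra_simps add_divide_distrib diff_divide_distrib; linarith)
qed

lemma cos_hyp:
  assumes "t + u = -(2*t) - 2*pi*real k"
  shows "cos t * cos u - sin t * sin u = cos t ^ 2 - sin t ^ 2"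
proof -
  have "cos (t + u) = cos (2*t)" unfolding assms cos_shift by simp
  thus ?thesis by (simp add: cos_add cos_double)
qed

lemma lincomb:
  fixes x y r c s ka kb :: real
  assumes "x - y = (r*r-3)*ka + (c^2+s^2-1)*kb" "r*r = 3" "c^2+s^2 = 1"
  shows "x = y"
  using assms by simp

theorem mainTheorem10:
  fixes a b u :: real
  assumes "a > b" and "b > 0"
  defines "P \<equiv> (\<lambda>t. Complex (a * cos t) (b * sin t))"
      and "tt \<equiv> (\<lambda>i::nat. - u / 3 - 2 * pi * (real i - 1) / 3)"
  shows "(\<forall>i\<in>{1,2,3}. on_ellipse a b 1 (P (tt i))) \<and>
         (P (tt 1) + P (tt 2) + P (tt 3)) / 3 = 0 \<and>
         side_tangent a b (1/4) (P (tt 1)) (P (tt 2)) \<and>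
         side_tangent a b (1/4) (P (tt 2)) (P (tt 3)) \<and>
         side_tangent a b (1/4) (P (tt 3)) (P (tt 1)) \<and>
         tri_area (P (tt 1)) (P (tt 2)) (P (tt 3)) = 3 * sqrt 3 / 4 * a * b \<and>
         steiner_point (P (tt 1)) (P (tt 2)) (P (tt 3)) (P u)"
proof -
  have a0: "a > 0" using assms(1,2) by linarith
  define \<theta> where "\<theta> = -u/3"
  define \<phi> where "\<phi> = 2*pi/3"
  define r where "r = sqrt 3"
  have r2: "r*r = 3" by (simp add: r_def)
  have r0: "r > 0" by (simp add: r_def)
  have c\<phi>: "cos \<phi> = -1/2" using cos_120 by (simp add: \<phi>_def)
  have s\<phi>: "sin \<phi> = r/2" using sin_120 by (simp add: \<phi>_def r_def)
  have t1: "tt 1 = \<theta>" by (simp add: tt_def \<theta>_def)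
  have t2: "tt 2 = \<theta> - \<phi>" by (simp add: tt_def \<theta>_def \<phi>_def)
  have t3: "tt 3 = \<theta> - \<phi> - \<phi>" by (simp add: tt_def \<theta>_def \<phi>_def field_simps)
  define c where "c = cos \<theta>"
  define s where "s = sin \<theta>"
  have cs: "c^2 + s^2 = 1" by (simp add: c_def s_def)
  have C2: "cos (\<theta>-\<phi>) = -c/2 + r* s/2" by (simp add: cos_diff c\<phi> s\<phi> c_def s_def)
  have S2: "sin (\<theta>-\<phi>) = -s/2 - r*c/2" by (simp add: sin_diff c\<phi> s\<phi> c_def s_def)
  have C3: "cos (\<theta>-\<phi>-\<phi>) = -c/2 - r* s/2"
  proof -
    have "cos (\<theta>-\<phi>-\<phi>) = cos (\<theta>-\<phi>) * cos \<phi> + sin (\<theta>-\<phi>) * sin \<phi>" by (rule cos_diff)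
    also have "\<dots> = (-c/2 + r* s/2)*(-1/2) + (-s/2 - r*c/2)*(r/2)" unfolding C2 S2 c\<phi> s\<phi> ..
    also have "\<dots> = -c/2 - r* s/2" by (rule lincomb[where ka="-c/4" and kb=0, OF _ r2 cs]) (simp add: field_simps power2_eq_square)
    finally show ?thesis .
  qed
  have S3: "sin (\<theta>-\<phi>-\<phi>) = -s/2 + r*c/2"
  proof -
    have "sin (\<theta>-\<phi>-\<phi>) = sin (\<theta>-\<phi>) * cos \<phi> - cos (\<theta>-\<phi>) * sin \<phi>" by (rule sin_diff)
    also have "\<dots> = (-s/2 - r*c/2)*(-1/2) - (-c/2 + r* s/2)*(r/2)" unfolding C2 S2 c\<phi> s\<phi> ..
    also have "\<dots> = -s/2 + r*c/2" by (rule lincomb[where ka="-s/4" and kb=0, OF _ r2 cs]) (simp add: field_simps power2_eq_square)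
    finally show ?thesis .
  qed
  have p1: "P (tt 1) = Complex (a*c) (b* s)" unfolding P_def t1 c_def s_def ..
  have p2: "P (tt 2) = Complex (a*(-c/2 + r* s/2)) (b*(-s/2 - r*c/2))" unfolding P_def t2 C2 S2 ..
  have p3: "P (tt 3) = Complex (a*(-c/2 - r* s/2)) (b*(-s/2 + r*c/2))" unfolding P_def t3 C3 S3 ..
  have G1: "\<forall>i\<in>{1,2,3}. on_ellipse a b 1 (P (tt i))"
    using a0 assms(2) by (simp add: on_ellipse_def P_def)
  have sum0: "P (tt 1) + P (tt 2) + P (tt 3) = 0"
    unfolding p1 p2 p3 by (simp add: complex_eq_iff algebra_simps)
  have G2: "(P (tt 1) + P (tt 2) + P (tt 3)) / 3 = 0" using sum0 by simp
  have u2: "(-c/2 + r* s/2)^2 + (-s/2 - r*c/2)^2 = 1"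
    by (rule lincomb[where ka="(c^2+s^2)/4" and kb=1, OF _ r2 cs]) (simp add: field_simps power2_eq_square)
  have u3: "(-c/2 - r* s/2)^2 + (-s/2 + r*c/2)^2 = 1"
    by (rule lincomb[where ka="(c^2+s^2)/4" and kb=1, OF _ r2 cs]) (simp add: field_simps power2_eq_square)
  have d12: "c*(-c/2 + r* s/2) + s*(-s/2 - r*c/2) = -1/2"
    by (rule lincomb[where ka=0 and kb="-1/2", OF _ r2 cs]) (simp add: field_simps power2_eq_square)
  have d23: "(-c/2 + r* s/2)*(-c/2 - r* s/2) + (-s/2 - r*c/2)*(-s/2 + r*c/2) = -1/2"
    by (rule lincomb[where ka="-(c^2+s^2)/4" and kb="-1/2", OF _ r2 cs]) (simp add: field_simps power2_eq_square)
  have d31: "(-c/2 - r* s/2)*c + (-s/2 + r*c/2)* s = -1/2"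
    by (rule lincomb[where ka=0 and kb="-1/2", OF _ r2 cs]) (simp add: field_simps power2_eq_square)
  have G3: "side_tangent a b (1/4) (P (tt 1)) (P (tt 2))"
    unfolding p1 p2 by (rule tangent_lemma[OF a0 assms(2) cs u2 d12])
  have G4: "side_tangent a b (1/4) (P (tt 2)) (P (tt 3))"
    unfolding p2 p3 by (rule tangent_lemma[OF a0 assms(2) u2 u3 d23])
  have G5: "side_tangent a b (1/4) (P (tt 3)) (P (tt 1))"
    unfolding p3 p1 by (rule tangent_lemma[OF a0 assms(2) u3 cs d31])
  have imv: "Im (cnj (P (tt 2) - P (tt 1)) * (P (tt 3) - P (tt 1))) = -(3*r/2)*a*b"
  proof -
    have "Im (cnj (P (tt 2) - P (tt 1)) * (P (tt 3) - P (tt 1)))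
      = a*b*(((-c/2 + r* s/2) - c)*((-s/2 + r*c/2) - s) - ((-s/2 - r*c/2) - s)*((-c/2 - r* s/2) - c))"
      unfolding p1 p2 p3 by (simp add: algebra_simps)
    also have "\<dots> = a*b*(-(3*r/2))"
      by (rule arg_cong[where f="\<lambda>x. a*b*x"], rule lincomb[where ka=0 and kb="-3/2*r", OF _ r2 cs]) (simp add: field_simps power2_eq_square)
    also have "\<dots> = -(3*r/2)*a*b" by simp
    finally show ?thesis .
  qed
  have G6: "tri_area (P (tt 1)) (P (tt 2)) (P (tt 3)) = 3 * sqrt 3 / 4 * a * b"
    unfolding tri_area_def imv using a0 assms(2) r0 by (simp add: r_def abs_mult)
  define Ap where "Ap = (a+b)/2"
  define Bp where "Bp = (a-b)/2"
  define K where "K = Ap*Bp"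
  define ctr where "ctr = Complex (K*cos u/a) (-K * sin u/b)"
  define R where "R = sqrt (Ap^2 + Bp^2 + (K*cos u/a)^2 + (K * sin u/b)^2)"
  define w where "w = 0 - ctr"
  have Ap0: "Ap > Bp" "Bp > 0" using assms(1,2) by (simp_all add: Ap_def Bp_def)
  have pc: "P t = 0 + complex_of_real Ap * cis t + complex_of_real Bp / cis t" for t
    unfolding P_def Ap_def Bp_def using P_cis by simp
  have ci: "cmod (P t - ctr) = R" if "t + u = -(2*t) - 2*pi*real k" for t k
    unfolding P_def ctr_def R_def K_def Ap_def Bp_def using circ[OF a0 assms(2) cos_hyp[OF that]] by simp
  have k1: "tt 1 + u = -(2*tt 1) - 2*pi*real (0::nat)" by (simp add: tt_def)
  have k2: "tt 2 + u = -(2*tt 2) - 2*pi*real (1::nat)" by (simp add: tt_def field_simps)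
  have k3: "tt 3 + u = -(2*tt 3) - 2*pi*real (2::nat)" by (simp add: tt_def field_simps)
  define \<omega> where "\<omega> = cis (-\<phi>)"
  have \<omega>v: "\<omega> = Complex (-1/2) (-r/2)" by (simp add: \<omega>_def complex_eq_iff c\<phi> s\<phi>)
  have \<omega>1: "1 + \<omega> + \<omega>*\<omega> = 0"
  proof -
    have "Re (1 + \<omega> + \<omega>*\<omega>) = (r*r-3)*(-1/4)" by (simp add: \<omega>v field_simps)
    moreover have "Im (1 + \<omega> + \<omega>*\<omega>) = 0" by (simp add: \<omega>v field_simps)
    ultimately show ?thesis using r2 by (simp add: complex_eq_iff)
  qed
  have \<omega>3: "\<omega>^3 = 1"
  proof -
    have "\<omega>^3 - 1 = (\<omega> - 1)*(1 + \<omega> + \<omega>*\<omega>)" by (simp add: algebra_simps power3_eq_cube)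
    thus ?thesis using \<omega>1 by simp
  qed
  define zA where "zA = cis \<theta>"
  have zB: "cis (\<theta> - \<phi>) = zA * \<omega>" by (simp add: zA_def \<omega>_def cis_mult)
  have zC: "cis (\<theta> - \<phi> - \<phi>) = zA * \<omega> * \<omega>" by (simp add: zA_def \<omega>_def cis_mult)
  have e1: "zA + zA * \<omega> + zA * \<omega> * \<omega> = 0"
  proof -
    have "zA + zA * \<omega> + zA * \<omega> * \<omega> = zA * (1 + \<omega> + \<omega>*\<omega>)" by (simp add: algebra_simps)
    thus ?thesis using \<omega>1 by simp
  qed
  have e2: "zA * (zA * \<omega>) + zA * (zA * \<omega> * \<omega>) + zA * \<omega> * (zA * \<omega> * \<omega>) = 0"
  proof -
    have "zA * (zA * \<omega>) + zA * (zA * \<omega> * \<omega>) + zA * \<omega> * (zA * \<omega> * \<omega>) = zA*zA*\<omega>*(1 + \<omega> + \<omega>*\<omega>)"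
      by (simp add: algebra_simps)
    thus ?thesis using \<omega>1 by simp
  qed
  have p3z: "zA * (zA * \<omega>) * (zA * \<omega> * \<omega>) = cis (-u)"
  proof -
    have "zA * (zA * \<omega>) * (zA * \<omega> * \<omega>) = zA^3 * \<omega>^3" by (simp add: algebra_simps power3_eq_cube)
    also have "\<dots> = cis (real 3 * \<theta>)" unfolding \<omega>3 zA_def using Complex.DeMoivre[of \<theta> 3] by simp
    also have "real 3 * \<theta> = -u" by (simp add: \<theta>_def)
    finally show ?thesis .
  qed
  have e3: "zA * (zA * \<omega>) * (zA * \<omega> * \<omega>) * cis u = 1"
    unfolding p3z by (simp add: cis_mult)
  have hh: "complex_of_real Bp * cnj w + complex_of_real Ap * w = - complex_of_real (Ap*Bp) * cis (-u)"
     "complex_of_real Ap * cnj w + complex_of_real Bp * w = - complex_of_real (Ap*Bp) * cis u"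
    using h12[OF a0 assms(2), of Ap Bp w u] unfolding w_def ctr_def K_def Ap_def Bp_def by (simp_all add: field_simps)
  have h1: "Bp * cnj w + Ap * w = - (Ap*Bp) * (zA * (zA * \<omega>) * (zA * \<omega> * \<omega>))"
    using hh(1) unfolding p3z by simp
  have h2: "Ap * cnj w + Bp * w = - (Ap*Bp) * cis u"
    using hh(2) by simp
  have h3: "Bp^2 + w * cnj w + Ap^2 = R^2"
  proof -
    have "w * cnj w = complex_of_real ((K*cos u/a)^2 + (K * sin u/b)^2)"
      by (simp add: w_def ctr_def complex_mult_cnj)
    moreover have "R^2 = Ap^2 + Bp^2 + (K*cos u/a)^2 + (K * sin u/b)^2"
      unfolding R_def by (simp add: add_nonneg_nonneg)
    ultimately show ?thesis by (simp add: complex_eq_iff)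
  qed
  have pp: "[:complex_of_real Bp, w, complex_of_real Ap:] * [:cnj (complex_of_real Ap), cnj w, cnj (complex_of_real Bp):]
     - monom (complex_of_real (R^2)) 2
     = smult (complex_of_real (Ap*Bp)) ([:-zA, 1:] * [:-(zA * \<omega>), 1:] * [:-(zA * \<omega> * \<omega>), 1:] * [:-cis u, 1:])"
    by (rule poly_part[OF e1 e2 e3 h1 h2 h3])
  have G7: "steiner_point (P (tt 1)) (P (tt 2)) (P (tt 3)) (P u)"
  proof (rule steiner_intro[where G=0 and \<alpha>="complex_of_real Ap" and \<beta>="complex_of_real Bp"
       and zA=zA and zB="zA*\<omega>" and zC="zA*\<omega>*\<omega>" and zS="cis u" and ctr=ctr and R=R
       and c="complex_of_real (Ap*Bp)"])
    show "Im (cnj (P (tt 2) - P (tt 1)) * (P (tt 3) - P (tt 1))) \<noteq> 0"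
      unfolding imv using r0 a0 assms(2) by simp
    show "(P (tt 1) + P (tt 2) + P (tt 3)) / 3 = 0" by (rule G2)
    show "cmod (complex_of_real Ap) \<noteq> cmod (complex_of_real Bp)" using Ap0 by simp
    show "cmod zA = 1" "cmod (zA*\<omega>) = 1" "cmod (zA*\<omega>*\<omega>) = 1" "cmod (cis u) = 1"
      by (simp_all add: zA_def \<omega>_def norm_mult)
    show "P (tt 1) = 0 + complex_of_real Ap * zA + complex_of_real Bp / zA"
      using pc[of "tt 1"] unfolding t1 zA_def .
    show "P (tt 2) = 0 + complex_of_real Ap * (zA*\<omega>) + complex_of_real Bp / (zA*\<omega>)"
      using pc[of "tt 2"] unfolding t2 zB .
    show "P (tt 3) = 0 + complex_of_real Ap * (zA*\<omega>*\<omega>) + complex_of_real Bp / (zA*\<omega>*\<omega>)"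
      using pc[of "tt 3"] unfolding t3 zC .
    show "P u = 0 + complex_of_real Ap * cis u + complex_of_real Bp / cis u" by (rule pc)
    show "cmod (P (tt 1) - ctr) = R" by (rule ci[OF k1])
    show "cmod (P (tt 2) - ctr) = R" by (rule ci[OF k2])
    show "cmod (P (tt 3) - ctr) = R" by (rule ci[OF k3])
    show "complex_of_real (Ap*Bp) \<noteq> 0" using Ap0 by simp
    show "[:complex_of_real Bp, 0 - ctr, complex_of_real Ap:] * [:cnj (complex_of_real Ap), cnj (0 - ctr), cnj (complex_of_real Bp):]
       - monom (complex_of_real (R^2)) 2
       = smult (complex_of_real (Ap*Bp)) ([:-zA, 1:] * [:-(zA*\<omega>), 1:] * [:-(zA*\<omega>*\<omega>), 1:] * [:-cis u, 1:])"
      using pp unfolding w_def .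
  qed
  show ?thesis using G1 G2 G3 G4 G5 G6 G7 by blast
qed

end
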